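(* Let $(\mathcal S,\mathcal Q,\Theta)$ be a Pufferfish scenario, $(\mathcal U,\omega)$ a (continuous or finite) slice profile, $\alpha>1$, $\epsilon\ge0$, $f:\mathcal X\to\mathbb R^d$ a query, and $\mathcal M(X)=f(X)+N$ with $N\sim\zeta$ independent of $X$. (i) If $\mathtt{AR}^\infty_{\alpha,\omega}(\mathcal M^\theta_{s_i}\|\mathcal M^\theta_{s_j})\le\epsilon$ for all $\theta\in\Theta$ and all $(s_i,s_j)\in\mathcal Q$ with $P^S_\theta(s_i),P^S_\theta(s_j)>0$, then $\mathcal M$ satisfies $(\alpha,\epsilon,\omega)$-Ave-SRPP in $(\mathcal S,\mathcal Q,\Theta)$. (ii) If $\mathtt{JR}^\infty_{\alpha,\omega}(\mathcal M^\theta_{s_i}\|\mathcal M^\theta_{s_j})\le\epsilon$ for all such $\theta$ and $(s_i,s_j)$, then $\mathcal M$ satisfies $(\alpha,\epsilon,\omega)$-Joint-SRPP in $(\mathcal S,\mathcal Q,\Theta)$.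
   Context: A Pufferfish scenario $(\mathcal S,\mathcal Q,\Theta)$: secrets $\mathcal S$, secret pairs $\mathcal Q\subseteq\mathcal S\times\mathcal S$, priors $\Theta$, each $\theta$ a joint distribution of secret $S$ and dataset $X$ with secret marginal $P^S_\theta$. $P^{f,s}_\theta$ is the law of $f(X)$ given $S=s$ under $\theta$; $\mathcal M^\theta_s$ is the law of $\mathcal M(X)$ given $S=s$ under $\theta$. A slice profile $(\mathcal U,\omega)$: $\mathcal U\subseteq\mathbb S^{d-1}$ and $\omega$ a probability measure on the unit sphere $\mathbb S^{d-1}$ supported on $\mathcal U$. $\Psi^u(a)=\langle a,u\rangle$, $\Psi^u_\#$ the pushforward. $\mathtt D_\alpha(P\|Q)=\frac1{\alpha-1}\log\mathbb E_{Q}[(dP/dQ)^\alpha]$ is R\'enyi divergence. $W_\infty(\nu,\mu)=\inf_{\pi\in\Pi(\nu,\mu)}\sup_{(x,y)\in\mathrm{supp}\,\pi}|x-y|$ for measures on $\mathbb R$. $\zeta_{-a}$ is the law of $U-a$, $U\sim\zeta$; $R_\alpha(\zeta,r)=\sup_{\|a\|_2\le r}\mathtt D_\alpha(\zeta_{-a}\|\zeta)$. With $z^u_\infty:=W_\infty(\Psi^u_\#P^{f,s_i}_\theta,\Psi^u_\#P^{f,s_j}_\theta)$, define $\mathtt{AR}^\infty_{\alpha,\omega}(\mathcal M^\theta_{s_i}\|\mathcal M^\theta_{s_j}):=\int_{\mathbb S^{d-1}}R_\alpha(\zeta,z^u_\infty)\,d\omega(u)$ and $\mathtt{JR}^\infty_{\alpha,\omega}(\mathcal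 M^\theta_{s_i}\|\mathcal M^\theta_{s_j}):=\frac1{\alpha-1}\log\int_{\mathbb S^{d-1}}\exp((\alpha-1)R_\alpha(\zeta,z^u_\infty))\,d\omega(u)$. Average sliced R\'enyi divergence: $\mathtt{AveSD}^\omega_\alpha(P\|Q)=\int\mathtt D_\alpha(\Psi^u_\#P\|\Psi^u_\#Q)\,d\omega(u)$; joint sliced R\'enyi divergence: $\mathtt{JSD}^\omega_\alpha(P\|Q)=\frac1{\alpha-1}\log\int\exp((\alpha-1)\mathtt D_\alpha(\Psi^u_\#P\|\Psi^u_\#Q))\,d\omega(u)$. $\mathcal M$ is $(\alpha,\epsilon,\omega)$-Ave-SRPP (resp. Joint-SRPP) in $(\mathcal S,\mathcal Q,\Theta)$ if $\mathtt{AveSD}^\omega_\alpha(\mathcal M^\theta_{s_i}\|\mathcal M^\theta_{s_j})\le\epsilon$ (resp. $\mathtt{JSD}^\omega_\alpha(\cdot)\le\epsilon$) for all $\theta\in\Theta$ and $(s_i,s_j)\in\mathcal Q$ with $P^S_\theta(s_i),P^S_\theta(s_j)>0$. *)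

theory Defs
  imports "HOL-Probability.Probability"
begin

text \<open>dP/dQ is RN_deriv Q P.  D_alpha(P||Q) = 1/(alpha-1) log E_Q[(dP/dQ)^alpha].\<close>

definition ln_enn :: "ennreal \<Rightarrow> ereal" where
  "ln_enn x = (if x = \<infinity> then \<infinity> else if x = 0 then -\<infinity> else ereal (ln (enn2real x)))"

definition exp_ereal :: "ereal \<Rightarrow> ennreal" where
  "exp_ereal r = (case r of ereal x \<Rightarrow> ennreal (exp x) | PInfty \<Rightarrow> \<infinity> | MInfty \<Rightarrow> 0)"

definition renyi_div :: "real \<Rightarrow> 'b measure \<Rightarrow> 'b measure \<Rightarrow> ereal" where
  "renyi_div \<alpha> P Q =
     (if absolutely_continuous Q P \<and> sets P = sets Q
      then ereal (1 / (\<alpha> - 1)) *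
             ln_enn (\<integral>\<^sup>+ x. ennreal ((enn2real (RN_deriv Q P x)) powr \<alpha>) \<partial>Q)
      else \<infinity>)"

definition slice :: "'a::euclidean_space \<Rightarrow> 'a measure \<Rightarrow> real measure" where
  "slice u P = distr P borel (\<lambda>a. inner a u)"

definition AveSD :: "real \<Rightarrow> 'a::euclidean_space measure \<Rightarrow> 'a measure \<Rightarrow> 'a measure \<Rightarrow> ereal" where
  "AveSD \<alpha> \<omega> P Q = enn2ereal (\<integral>\<^sup>+ u. e2ennreal (renyi_div \<alpha> (slice u P) (slice u Q)) \<partial>\<omega>)"

definition JSD :: "real \<Rightarrow> 'a::euclidean_space measure \<Rightarrow> 'a measure \<Rightarrow> 'a measure \<Rightarrow> ereal" where
  "JSD \<alpha> \<omega> P Q = ereal (1 / (\<alpha> - 1)) *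
     ln_enn (\<integral>\<^sup>+ u. exp_ereal (ereal (\<alpha> - 1) * renyi_div \<alpha> (slice u P) (slice u Q)) \<partial>\<omega>)"

definition msupp :: "'b::topological_space measure \<Rightarrow> 'b set" where
  "msupp \<pi> = {z. \<forall>V. open V \<and> z \<in> V \<longrightarrow> emeasure \<pi> V > 0}"

definition coupling :: "(real \<times> real) measure \<Rightarrow> real measure \<Rightarrow> real measure \<Rightarrow> bool" where
  "coupling \<pi> \<nu> \<mu> \<longleftrightarrow> prob_space \<pi> \<and> sets \<pi> = sets borel \<and>
     distr \<pi> borel fst = \<nu> \<and> distr \<pi> borel snd = \<mu>"

definition W_inf :: "real measure \<Rightarrow> real measure \<Rightarrow> ereal" where
  "W_inf \<nu> \<mu> = (INF \<pi>\<in>{\<pi>. coupling \<pi> \<nu> \<mu>}. SUP z\<in>msupp \<pi>. ereal \<bar>fst z - snd z\<bar>)"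

definition shift_meas :: "'a::euclidean_space measure \<Rightarrow> 'a \<Rightarrow> 'a measure" where
  "shift_meas \<zeta> a = distr \<zeta> borel (\<lambda>x. x - a)"

definition R_shift :: "real \<Rightarrow> 'a::euclidean_space measure \<Rightarrow> ereal \<Rightarrow> ereal" where
  "R_shift \<alpha> \<zeta> r = (SUP a\<in>{a. ereal (norm a) \<le> r}. renyi_div \<alpha> (shift_meas \<zeta> a) \<zeta>)"

text \<open>Both take the query laws P^{f,s_i}, P^{f,s_j} (on R^d) and the noise law.\<close>

definition AR_inf :: "real \<Rightarrow> 'a::euclidean_space measure \<Rightarrow> 'a measure \<Rightarrow> 'a measure \<Rightarrow> 'a measure \<Rightarrow> ereal" where
  "AR_inf \<alpha> \<omega> \<zeta> P1 P2 =
     enn2ereal (\<integral>\<^sup>+ u. e2ennreal (R_shift \<alpha> \<zeta> (W_inf (slice u P1) (slice u P2))) \<partial>\<omega>)"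

definition JR_inf :: "real \<Rightarrow> 'a::euclidean_space measure \<Rightarrow> 'a measure \<Rightarrow> 'a measure \<Rightarrow> 'a measure \<Rightarrow> ereal" where
  "JR_inf \<alpha> \<omega> \<zeta> P1 P2 = ereal (1 / (\<alpha> - 1)) *
     ln_enn (\<integral>\<^sup>+ u. exp_ereal (ereal (\<alpha> - 1) * R_shift \<alpha> \<zeta> (W_inf (slice u P1) (slice u P2))) \<partial>\<omega>)"

section \<open>Pufferfish: priors are joint laws of (secret, dataset)\<close>

definition secret_prob :: "('s \<times> 'x) measure \<Rightarrow> 's \<Rightarrow> real" where
  "secret_prob \<theta> s = measure \<theta> {p \<in> space \<theta>. fst p = s}"

definition cond_secret :: "('s \<times> 'x) measure \<Rightarrow> 's \<Rightarrow> ('s \<times> 'x) measure" where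
  "cond_secret \<theta> s = density \<theta>
     (\<lambda>p. indicator {p \<in> space \<theta>. fst p = s} p / ennreal (secret_prob \<theta> s))"

definition query_law :: "('s \<times> 'x) measure \<Rightarrow> ('x \<Rightarrow> 'a::euclidean_space) \<Rightarrow> 's \<Rightarrow> 'a measure" where
  "query_law \<theta> f s = distr (cond_secret \<theta> s) borel (\<lambda>p. f (snd p))"

definition mech_law :: "('s \<times> 'x) measure \<Rightarrow> ('x \<Rightarrow> 'a::euclidean_space) \<Rightarrow> 'a measure \<Rightarrow> 's \<Rightarrow> 'a measure" where
  "mech_law \<theta> f \<zeta> s = distr (query_law \<theta> f s \<Otimes>\<^sub>M \<zeta>) borel (\<lambda>(y, n). y + n)"

definition slice_profile :: "'a::euclidean_space set \<Rightarrow> 'a measure \<Rightarrow> bool" where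
  "slice_profile U \<omega> \<longleftrightarrow> U \<subseteq> sphere 0 1 \<and> prob_space \<omega> \<and> sets \<omega> = sets borel \<and>
     U \<in> sets borel \<and> emeasure \<omega> U = 1"

definition pufferfish_scenario :: "'s set \<Rightarrow> ('s \<times> 's) set \<Rightarrow> ('s \<times> 'x) measure set \<Rightarrow> bool" where
  "pufferfish_scenario S Q \<Theta> \<longleftrightarrow> Q \<subseteq> S \<times> S \<and>
     (\<forall>\<theta>\<in>\<Theta>. prob_space \<theta> \<and> (\<forall>s\<in>S. {p \<in> space \<theta>. fst p = s} \<in> sets \<theta>))"

definition Ave_SRPP :: "real \<Rightarrow> real \<Rightarrow> 'a::euclidean_space measure \<Rightarrow> 's set \<Rightarrow> ('s \<times> 's) set
    \<Rightarrow> ('s \<times> 'x) measure set \<Rightarrow> (('s \<times> 'x) measure \<Rightarrow> 's \<Rightarrow> 'a measure) \<Rightarrow> bool" where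
  "Ave_SRPP \<alpha> \<epsilon> \<omega> S Q \<Theta> M \<longleftrightarrow>
     (\<forall>\<theta>\<in>\<Theta>. \<forall>(si, sj)\<in>Q. secret_prob \<theta> si > 0 \<and> secret_prob \<theta> sj > 0 \<longrightarrow>
        AveSD \<alpha> \<omega> (M \<theta> si) (M \<theta> sj) \<le> ereal \<epsilon>)"

definition Joint_SRPP :: "real \<Rightarrow> real \<Rightarrow> 'a::euclidean_space measure \<Rightarrow> 's set \<Rightarrow> ('s \<times> 's) set
    \<Rightarrow> ('s \<times> 'x) measure set \<Rightarrow> (('s \<times> 'x) measure \<Rightarrow> 's \<Rightarrow> 'a measure) \<Rightarrow> bool" where
  "Joint_SRPP \<alpha> \<epsilon> \<omega> S Q \<Theta> M \<longleftrightarrow>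
     (\<forall>\<theta>\<in>\<Theta>. \<forall>(si, sj)\<in>Q. secret_prob \<theta> si > 0 \<and> secret_prob \<theta> sj > 0 \<longrightarrow>
        JSD \<alpha> \<omega> (M \<theta> si) (M \<theta> sj) \<le> ereal \<epsilon>)"

end

theory Submission
  imports Defs
begin


definition hel :: "real \<Rightarrow> 'b measure \<Rightarrow> 'b measure \<Rightarrow> ennreal" where
  "hel \<alpha> P Q = (\<integral>\<^sup>+ x. ennreal ((enn2real (RN_deriv Q P x)) powr \<alpha>) \<partial>Q)"

definition youngc :: "real \<Rightarrow> real \<Rightarrow> 'b measure \<Rightarrow> 'b measure \<Rightarrow> bool" where
  "youngc \<alpha> C P Q \<longleftrightarrow> (\<forall>g \<in> borel_measurable Q. (\<forall>x. 0 \<le> g x) \<longrightarrow>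
     (\<integral>\<^sup>+ x. ennreal (g x) \<partial>P) \<le> ennreal (C / \<alpha>) +
        ennreal ((\<alpha> - 1) / \<alpha>) * (\<integral>\<^sup>+ x. ennreal (g x powr (\<alpha> / (\<alpha> - 1))) \<partial>Q))"

lemma young_pt:
  fixes p g \<alpha> :: real
  assumes "\<alpha> > 1" "p \<ge> 0" "g \<ge> 0"
  shows "p * g \<le> p powr \<alpha> / \<alpha> + ((\<alpha> - 1) / \<alpha>) * g powr (\<alpha> / (\<alpha> - 1))"
proof -
  have q: "\<alpha> / (\<alpha> - 1) > 1" using assms by (simp add: field_simps)
  have s: "1 / \<alpha> + 1 / (\<alpha> / (\<alpha> - 1)) = 1" using assms by (simp add: field_simps)
  have "p * g \<le> p powr \<alpha> / \<alpha> + g powr (\<alpha> / (\<alpha> - 1)) / (\<alpha> / (\<alpha> - 1))"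
    using Youngs_inequality[OF assms(1) q s assms(2,3)] .
  also have "g powr (\<alpha> / (\<alpha> - 1)) / (\<alpha> / (\<alpha> - 1)) = ((\<alpha> - 1) / \<alpha>) * g powr (\<alpha> / (\<alpha> - 1))"
    by simp
  finally show ?thesis .
qed

lemma lemmaA:
  assumes a: "\<alpha> > 1" and P: "prob_space P" and Q: "prob_space Q" and sets: "sets P = sets Q"
    and ac: "absolutely_continuous Q P" and h: "hel \<alpha> P Q \<le> ennreal C" and C0: "C \<ge> 0"
  shows "youngc \<alpha> C P Q"
  unfolding youngc_def
proof (intro ballI impI)
  fix g :: "_ \<Rightarrow> real" assume gm: "g \<in> borel_measurable Q" and g0: "\<forall>x. 0 \<le> g x"
  interpret Q: prob_space Q by fact
  interpret P: prob_space P by fact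
  let ?r = "RN_deriv Q P"
  have "(\<integral>\<^sup>+ x. ennreal (g x) \<partial>P) = (\<integral>\<^sup>+ x. ?r x * ennreal (g x) \<partial>Q)"
    using Q.RN_deriv_nn_integral[OF ac sets] gm by (simp add: measurable_cong_sets[OF sets])
  also have "\<dots> = (\<integral>\<^sup>+ x. ennreal (enn2real (?r x) * g x) \<partial>Q)"
  proof (rule nn_integral_cong_AE)
    show "AE x in Q. ?r x * ennreal (g x) = ennreal (enn2real (?r x) * g x)"
      using Q.RN_deriv_finite[OF P.sigma_finite_measure_axioms ac sets]
      by eventually_elim (auto simp: ennreal_mult g0 less_top)
  qed
  also have "\<dots> \<le> (\<integral>\<^sup>+ x. ennreal (1/\<alpha>) * ennreal (enn2real (?r x) powr \<alpha>) + ennreal ((\<alpha> - 1) / \<alpha>) * ennreal (g x powr (\<alpha> / (\<alpha> - 1))) \<partial>Q)"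
    apply (rule nn_integral_mono)
    using young_pt[OF a enn2real_nonneg g0[rule_format]] a
    by (simp add: ennreal_plus[symmetric] ennreal_mult[symmetric] del: ennreal_plus)
  also have "\<dots> = (\<integral>\<^sup>+ x. ennreal (1/\<alpha>) * ennreal (enn2real (?r x) powr \<alpha>) \<partial>Q) + (\<integral>\<^sup>+ x. ennreal ((\<alpha> - 1) / \<alpha>) * ennreal (g x powr (\<alpha> / (\<alpha> - 1))) \<partial>Q)"
    using gm by (intro nn_integral_add) auto
  also have "\<dots> = ennreal (1/\<alpha>) * hel \<alpha> P Q + ennreal ((\<alpha> - 1) / \<alpha>) * (\<integral>\<^sup>+ x. ennreal (g x powr (\<alpha> / (\<alpha> - 1))) \<partial>Q)"
    unfolding hel_def
    using gm by (simp add: nn_integral_cmult)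
  also have "\<dots> \<le> ennreal (1/\<alpha>) * ennreal C + ennreal ((\<alpha> - 1) / \<alpha>) * (\<integral>\<^sup>+ x. ennreal (g x powr (\<alpha> / (\<alpha> - 1))) \<partial>Q)"
    by (intro add_mono mult_left_mono h) auto
  also have "ennreal (1/\<alpha>) * ennreal C = ennreal (C / \<alpha>)"
    using a C0 by (simp add: ennreal_mult[symmetric])
  finally show "(\<integral>\<^sup>+ x. ennreal (g x) \<partial>P) \<le> ennreal (C / \<alpha>) + ennreal ((\<alpha> - 1) / \<alpha>) * (\<integral>\<^sup>+ x. ennreal (g x powr (\<alpha> / (\<alpha> - 1))) \<partial>Q)" .
qed
lemma lemmaB_ac:
  assumes a: "\<alpha> > 1" and P: "prob_space P" and Q: "prob_space Q" and sets: "sets P = sets Q"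
    and y: "youngc \<alpha> C P Q"
  shows "absolutely_continuous Q P"
  unfolding absolutely_continuous_def
proof
  fix A assume A: "A \<in> null_sets Q"
  interpret Q: prob_space Q by fact
  interpret P: prob_space P by fact
  have Am: "A \<in> sets Q" using A by auto
  show "A \<in> null_sets P"
  proof (rule ccontr)
    assume "A \<notin> null_sets P"
    moreover have AP: "A \<in> sets P" using Am sets by simp
    ultimately have "measure P A \<noteq> 0" by (auto simp: P.emeasure_eq_measure)
    then have pos: "measure P A > 0" using measure_nonneg[of P A] by linarith
    define l where "l = (max C 0 / \<alpha> + 1) / measure P A"
    have l0: "l \<ge> 0" using pos a unfolding l_def by simp
    define g where "g = (\<lambda>x. l * indicator A x :: real)"
    have gm: "g \<in> borel_measurable Q" unfolding g_def using Am by measurable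
    have g0: "\<forall>x. 0 \<le> g x" using l0 unfolding g_def by simp
    have "(\<integral>\<^sup>+ x. ennreal (g x) \<partial>P) \<le> ennreal (C / \<alpha>) +
        ennreal ((\<alpha> - 1) / \<alpha>) * (\<integral>\<^sup>+ x. ennreal (g x powr (\<alpha> / (\<alpha> - 1))) \<partial>Q)"
      using y gm g0 unfolding youngc_def by blast
    also have "(\<integral>\<^sup>+ x. ennreal (g x powr (\<alpha> / (\<alpha> - 1))) \<partial>Q) = (\<integral>\<^sup>+ x. ennreal (l powr (\<alpha> / (\<alpha> - 1))) * indicator A x \<partial>Q)"
      by (intro nn_integral_cong) (auto simp: g_def indicator_def)
    also have "\<dots> = 0" using A by (subst nn_integral_cmult_indicator) auto
    also have "(\<integral>\<^sup>+ x. ennreal (g x) \<partial>P) = (\<integral>\<^sup>+ x. ennreal l * indicator A x \<partial>P)"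
      by (intro nn_integral_cong) (auto simp: g_def indicator_def)
    also have "\<dots> = ennreal l * emeasure P A" using Am sets by (simp add: nn_integral_cmult_indicator)
    also have "\<dots> = ennreal (max C 0 / \<alpha> + 1)"
      using pos l0 by (simp add: P.emeasure_eq_measure ennreal_mult[symmetric] l_def)
    finally have "ennreal (max C 0 / \<alpha> + 1) \<le> ennreal (C / \<alpha>)" by simp
    moreover have "\<alpha> * \<alpha> > 0" using a by simp
    ultimately show False using a
      by (cases "C \<ge> 0") (auto simp: ennreal_le_iff2 field_simps max_def)
  qed
qed

lemma lemmaB_hel:
  assumes a: "\<alpha> > 1" and P: "prob_space P" and Q: "prob_space Q" and sets: "sets P = sets Q"
    and y: "youngc \<alpha> C P Q" and C0: "C \<ge> 0"
  shows "hel \<alpha> P Q \<le> ennreal C"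
proof -
  interpret Q: prob_space Q by fact
  interpret P: prob_space P by fact
  have ac: "absolutely_continuous Q P" by (rule lemmaB_ac[OF a P Q sets y])
  let ?r = "RN_deriv Q P"
  define p where "p = (\<lambda>x. enn2real (?r x))"
  have pm: "p \<in> borel_measurable Q" unfolding p_def by measurable
  define m where "m = (\<lambda>(n::nat) x. min (p x) (real n))"
  have mm: "m n \<in> borel_measurable Q" for n unfolding m_def using pm by measurable
  have m0: "0 \<le> m n x" for n x unfolding m_def p_def by simp
  have bnd: "(\<integral>\<^sup>+ x. ennreal (m n x powr \<alpha>) \<partial>Q) \<le> ennreal C" for n
  proof -
    define g where "g = (\<lambda>x. m n x powr (\<alpha> - 1))"
    have gm: "g \<in> borel_measurable Q" unfolding g_def using mm by measurable
    have g0: "\<forall>x. 0 \<le> g x" unfolding g_def by simp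
    have gb: "g x powr (\<alpha> / (\<alpha> - 1)) = m n x powr \<alpha>" for x
      unfolding g_def using a m0[of n x] by (simp add: powr_powr)
    define I where "I = (\<integral>\<^sup>+ x. ennreal (m n x powr \<alpha>) \<partial>Q)"
    have "I \<le> (\<integral>\<^sup>+ x. ennreal (real n powr \<alpha>) \<partial>Q)"
      unfolding I_def using a m0
      by (intro nn_integral_mono) (auto simp: m_def intro!: powr_mono2)
    also have "\<dots> < \<top>" by (simp add: Q.emeasure_space_1)
    finally have Ifin: "I < \<top>" .
    have "I \<le> (\<integral>\<^sup>+ x. ennreal (p x * g x) \<partial>Q)"
      unfolding I_def
    proof (intro nn_integral_mono)
      fix x
      show "ennreal (m n x powr \<alpha>) \<le> ennreal (p x * g x)"
      proof (cases "m n x = 0")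
        case True then show ?thesis by simp
      next
        case False
        then have mp: "m n x > 0" using m0[of n x] by simp
        have "m n x powr \<alpha> = m n x * m n x powr (\<alpha> - 1)"
          using mp by (simp add: powr_diff field_simps powr_one)
        also have "\<dots> \<le> p x * g x" unfolding g_def
          by (intro mult_right_mono) (auto simp: m_def)
        finally show ?thesis by (rule ennreal_leI)
      qed
    qed
    also have "\<dots> = (\<integral>\<^sup>+ x. ?r x * ennreal (g x) \<partial>Q)"
    proof (rule nn_integral_cong_AE)
      show "AE x in Q. ennreal (p x * g x) = ?r x * ennreal (g x)"
        using Q.RN_deriv_finite[OF P.sigma_finite_measure_axioms ac sets]
        by eventually_elim (auto simp: ennreal_mult g0 less_top p_def)
    qed
    also have "\<dots> = (\<integral>\<^sup>+ x. ennreal (g x) \<partial>P)"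
      using Q.RN_deriv_nn_integral[OF ac sets] gm by (simp add: measurable_cong_sets[OF sets])
    also have "\<dots> \<le> ennreal (C / \<alpha>) + ennreal ((\<alpha> - 1) / \<alpha>) * (\<integral>\<^sup>+ x. ennreal (g x powr (\<alpha> / (\<alpha> - 1))) \<partial>Q)"
      using y gm g0 unfolding youngc_def by blast
    also have "(\<integral>\<^sup>+ x. ennreal (g x powr (\<alpha> / (\<alpha> - 1))) \<partial>Q) = I"
      unfolding I_def gb ..
    finally have ineq: "I \<le> ennreal (C / \<alpha>) + ennreal ((\<alpha> - 1) / \<alpha>) * I" .
    obtain i where i: "I = ennreal i" "i \<ge> 0" using Ifin by (cases I) auto
    have "i \<le> C / \<alpha> + ((\<alpha> - 1) / \<alpha>) * i"
      using ineq a C0 i by (simp add: ennreal_mult[symmetric] ennreal_plus[symmetric] del: ennreal_plus)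
    then have "i \<le> C" using a by (simp add: field_simps)
    then show ?thesis using i I_def by simp
  qed
  have "hel \<alpha> P Q = (\<integral>\<^sup>+ x. (SUP n. ennreal (m n x powr \<alpha>)) \<partial>Q)"
    unfolding hel_def
  proof (intro nn_integral_cong)
    fix x
    show "ennreal (enn2real (?r x) powr \<alpha>) = (SUP n. ennreal (m n x powr \<alpha>))"
    proof (rule antisym)
      obtain N :: nat where N: "p x \<le> real N" using real_arch_simple by blast
      have "ennreal (enn2real (?r x) powr \<alpha>) = ennreal (m N x powr \<alpha>)"
        using N by (simp add: m_def p_def)
      then show "ennreal (enn2real (?r x) powr \<alpha>) \<le> (SUP n. ennreal (m n x powr \<alpha>))"
        by (metis SUP_upper UNIV_I)
      show "(SUP n. ennreal (m n x powr \<alpha>)) \<le> ennreal (enn2real (?r x) powr \<alpha>)"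
        using a m0 by (intro SUP_least) (auto simp: m_def p_def intro!: powr_mono2)
    qed
  qed
  also have "\<dots> = (SUP n. \<integral>\<^sup>+ x. ennreal (m n x powr \<alpha>) \<partial>Q)"
  proof (rule nn_integral_monotone_convergence_SUP)
    show "incseq (\<lambda>n x. ennreal (m n x powr \<alpha>))"
      using a m0 by (auto simp: incseq_def le_fun_def m_def intro!: powr_mono2)
    show "\<And>i. (\<lambda>x. ennreal (m i x powr \<alpha>)) \<in> borel_measurable Q" using mm by measurable
  qed
  also have "\<dots> \<le> ennreal C" using bnd by (intro SUP_least) auto
  finally show ?thesis .
qed



lemma msupp_null:
  fixes \<pi> :: "(real \<times> real) measure"
  assumes sets: "sets \<pi> = sets borel" and Op: "open Op" and dis: "Op \<inter> msupp \<pi> = {}"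
  shows "emeasure \<pi> Op = 0"
proof -
  define F where "F = {V. open V \<and> V \<subseteq> Op \<and> emeasure \<pi> V = 0}"
  have UF: "\<Union>F = Op"
  proof
    show "\<Union>F \<subseteq> Op" unfolding F_def by auto
    show "Op \<subseteq> \<Union>F"
    proof
      fix z assume z: "z \<in> Op"
      then have "z \<notin> msupp \<pi>" using dis by auto
      then obtain V where V: "open V" "z \<in> V" "\<not> emeasure \<pi> V > 0" unfolding msupp_def by auto
      have "emeasure \<pi> (V \<inter> Op) \<le> emeasure \<pi> V"
        using V Op sets by (intro emeasure_mono) auto
      then have "emeasure \<pi> (V \<inter> Op) = 0" using V by (simp add: not_gr_zero)
      then have "V \<inter> Op \<in> F" using V Op unfolding F_def by auto
      then show "z \<in> \<Union>F" using V z by auto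
    qed
  qed
  obtain F' where F': "F' \<subseteq> F" "countable F'" "\<Union>F' = \<Union>F"
    using Lindelof[of F] unfolding F_def by blast
  have "(\<Union>V\<in>F'. V) \<in> null_sets \<pi>"
  proof (rule null_sets_UN'[OF F'(2)])
    fix V assume "V \<in> F'"
    then have "V \<in> F" using F' by auto
    then show "V \<in> null_sets \<pi>" unfolding F_def using sets by auto
  qed
  then show ?thesis using F' UF by auto
qed

lemma open_far: "open {z::real \<times> real. w < \<bar>fst z - snd z\<bar>}"
  by (intro open_Collect_less continuous_intros)

definition qf :: "real measure \<Rightarrow> real \<Rightarrow> real" where
  "qf \<nu> t = Inf {x. t \<le> cdf \<nu> x}"

lemma coupling_cdf:
  assumes c: "coupling \<pi> \<nu> \<mu>" and Op: "emeasure \<pi> {z. w < \<bar>fst z - snd z\<bar>} = 0"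
  shows "cdf \<nu> x \<le> cdf \<mu> (x + w)"
proof -
  interpret p: prob_space \<pi> using c unfolding coupling_def by auto
  have sets: "sets \<pi> = sets borel" using c unfolding coupling_def by auto
  have nu: "\<nu> = distr \<pi> borel fst" and mu: "\<mu> = distr \<pi> borel snd" using c unfolding coupling_def by auto
  have m1: "fst \<in> measurable \<pi> borel" "snd \<in> measurable \<pi> borel"
    using sets by (auto simp: measurable_cong_sets[OF sets refl] intro!: borel_measurable_continuous_onI continuous_intros)
  have sp: "space \<pi> = UNIV" using sets_eq_imp_space_eq[OF sets] by simp
  have Om: "{z. w < \<bar>fst z - snd z\<bar>} \<in> sets \<pi>" using sets open_far borel_open by simp
  have "cdf \<nu> x = measure \<pi> {z. fst z \<le> x}"
    unfolding cdf_def nu using m1(1) by (subst measure_distr) (auto simp: vimage_def sp)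
  also have "\<dots> \<le> measure \<pi> ({z. snd z \<le> x + w} \<union> {z. w < \<bar>fst z - snd z\<bar>})"
  proof (rule p.finite_measure_mono)
    show "{z. fst z \<le> x} \<subseteq> {z. snd z \<le> x + w} \<union> {z. w < \<bar>fst z - snd z\<bar>}" by auto
    have "{z::real\<times>real. snd z \<le> x + w} \<in> sets borel"
      by (intro borel_closed closed_Collect_le continuous_intros)
    then show "{z. snd z \<le> x + w} \<union> {z. w < \<bar>fst z - snd z\<bar>} \<in> sets \<pi>" using sets Om by simp
  qed
  also have "\<dots> \<le> measure \<pi> {z. snd z \<le> x + w} + measure \<pi> {z. w < \<bar>fst z - snd z\<bar>}"
  proof (rule measure_Un_le)
    have "{z::real\<times>real. snd z \<le> x + w} \<in> sets borel"
      by (intro borel_closed closed_Collect_le continuous_intros)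
    then show "{z. snd z \<le> x + w} \<in> sets \<pi>" using sets by simp
  qed (rule Om)
  also have "measure \<pi> {z. w < \<bar>fst z - snd z\<bar>} = 0" using Op by (simp add: measure_def)
  also have "measure \<pi> {z. snd z \<le> x + w} = cdf \<mu> (x + w)"
    unfolding cdf_def mu using m1(2) by (subst measure_distr) (auto simp: vimage_def sp)
  finally show ?thesis by simp
qed

lemma coupling_cdf2:
  assumes c: "coupling \<pi> \<nu> \<mu>" and Op: "emeasure \<pi> {z. w < \<bar>fst z - snd z\<bar>} = 0"
  shows "cdf \<mu> x \<le> cdf \<nu> (x + w)"
proof -
  interpret p: prob_space \<pi> using c unfolding coupling_def by auto
  have sets: "sets \<pi> = sets borel" using c unfolding coupling_def by auto
  have nu: "\<nu> = distr \<pi> borel fst" and mu: "\<mu> = distr \<pi> borel snd" using c unfolding coupling_def by auto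
  have m1: "fst \<in> measurable \<pi> borel" "snd \<in> measurable \<pi> borel"
    using sets by (auto simp: measurable_cong_sets[OF sets refl] intro!: borel_measurable_continuous_onI continuous_intros)
  have sp: "space \<pi> = UNIV" using sets_eq_imp_space_eq[OF sets] by simp
  have Om: "{z. w < \<bar>fst z - snd z\<bar>} \<in> sets \<pi>" using sets open_far borel_open by simp
  have "cdf \<mu> x = measure \<pi> {z. snd z \<le> x}"
    unfolding cdf_def mu using m1(2) by (subst measure_distr) (auto simp: vimage_def sp)
  also have "\<dots> \<le> measure \<pi> ({z. fst z \<le> x + w} \<union> {z. w < \<bar>fst z - snd z\<bar>})"
  proof (rule p.finite_measure_mono)
    show "{z. snd z \<le> x} \<subseteq> {z. fst z \<le> x + w} \<union> {z. w < \<bar>fst z - snd z\<bar>}" by auto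
    have "{z::real\<times>real. fst z \<le> x + w} \<in> sets borel"
      by (intro borel_closed closed_Collect_le continuous_intros)
    then show "{z. fst z \<le> x + w} \<union> {z. w < \<bar>fst z - snd z\<bar>} \<in> sets \<pi>" using sets Om by simp
  qed
  also have "\<dots> \<le> measure \<pi> {z. fst z \<le> x + w} + measure \<pi> {z. w < \<bar>fst z - snd z\<bar>}"
  proof (rule measure_Un_le)
    have "{z::real\<times>real. fst z \<le> x + w} \<in> sets borel"
      by (intro borel_closed closed_Collect_le continuous_intros)
    then show "{z. fst z \<le> x + w} \<in> sets \<pi>" using sets by simp
  qed (rule Om)
  also have "measure \<pi> {z. w < \<bar>fst z - snd z\<bar>} = 0" using Op by (simp add: measure_def)
  also have "measure \<pi> {z. fst z \<le> x + w} = cdf \<nu> (x + w)"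
    unfolding cdf_def nu using m1(1) by (subst measure_distr) (auto simp: vimage_def sp)
  finally show ?thesis by simp
qed

lemma qf_pseudo:
  assumes "real_distribution \<nu>" "0 < t" "t < 1"
  shows "t \<le> cdf \<nu> x \<longleftrightarrow> qf \<nu> t \<le> x"
proof -
  interpret N: cdf_distribution \<nu> using assms(1) by (simp add: cdf_distribution_def)
  show ?thesis unfolding qf_def using N.pseudoinverse[OF assms(2,3)] .
qed

lemma qf_W:
  assumes nu: "real_distribution \<nu>" and mu: "real_distribution \<mu>" and t: "0 < t" "t < 1"
  shows "ereal \<bar>qf \<nu> t - qf \<mu> t\<bar> \<le> W_inf \<nu> \<mu>"
proof -
  have main: "\<bar>qf \<nu> t - qf \<mu> t\<bar> \<le> w" if lt: "W_inf \<nu> \<mu> < ereal w" for w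
  proof -
    obtain \<pi> where c: "coupling \<pi> \<nu> \<mu>" and s: "(SUP z\<in>msupp \<pi>. ereal \<bar>fst z - snd z\<bar>) < ereal w"
      using lt unfolding W_inf_def INF_less_iff by auto
    have sets: "sets \<pi> = sets borel" using c unfolding coupling_def by auto
    have "{z. w < \<bar>fst z - snd z\<bar>} \<inter> msupp \<pi> = {}"
    proof (rule ccontr)
      assume "{z. w < \<bar>fst z - snd z\<bar>} \<inter> msupp \<pi> \<noteq> {}"
      then obtain z where z: "z \<in> msupp \<pi>" "w < \<bar>fst z - snd z\<bar>" by auto
      have "ereal \<bar>fst z - snd z\<bar> \<le> (SUP z\<in>msupp \<pi>. ereal \<bar>fst z - snd z\<bar>)"
        using z by (intro SUP_upper) auto
      then have "ereal \<bar>fst z - snd z\<bar> < ereal w" using s by (rule le_less_trans)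
      with z show False by simp
    qed
    then have null: "emeasure \<pi> {z. w < \<bar>fst z - snd z\<bar>} = 0"
      by (intro msupp_null[OF sets open_far])
    have "t \<le> cdf \<nu> (qf \<nu> t)" using qf_pseudo[OF nu t] by simp
    also have "\<dots> \<le> cdf \<mu> (qf \<nu> t + w)" by (rule coupling_cdf[OF c null])
    finally have 1: "qf \<mu> t \<le> qf \<nu> t + w" using qf_pseudo[OF mu t] by simp
    have "t \<le> cdf \<mu> (qf \<mu> t)" using qf_pseudo[OF mu t] by simp
    also have "\<dots> \<le> cdf \<nu> (qf \<mu> t + w)" by (rule coupling_cdf2[OF c null])
    finally have 2: "qf \<nu> t \<le> qf \<mu> t + w" using qf_pseudo[OF nu t] by simp
    from 1 2 show ?thesis by linarith
  qed
  show ?thesis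
  proof (rule ccontr)
    assume "\<not> ?thesis"
    then have "W_inf \<nu> \<mu> < ereal \<bar>qf \<nu> t - qf \<mu> t\<bar>" by simp
    then obtain w where "W_inf \<nu> \<mu> < ereal w" "ereal w < ereal \<bar>qf \<nu> t - qf \<mu> t\<bar>"
      using ereal_dense2 by blast
    with main show False by force
  qed
qed



lemma slice_conv_integral:
  fixes u :: "'a::euclidean_space" and P \<zeta> :: "'a measure" and F :: "real \<Rightarrow> ennreal"
  assumes P: "prob_space P" "sets P = sets borel" and Z: "prob_space \<zeta>" "sets \<zeta> = sets borel"
    and F: "F \<in> borel_measurable borel"
  shows "(\<integral>\<^sup>+ s. F s \<partial>slice u (distr (P \<Otimes>\<^sub>M \<zeta>) borel (\<lambda>(y, n). y + n)))
       = (\<integral>\<^sup>+ s. (\<integral>\<^sup>+ n. F (s + inner n u) \<partial>\<zeta>) \<partial>slice u P)"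
proof -
  interpret P: prob_space P by fact
  interpret Z: prob_space \<zeta> by fact
  interpret PZ: pair_sigma_finite P \<zeta> by unfold_locales
  have mP: "measurable P = measurable borel" by (rule measurable_cong_sets[OF P(2) refl, THEN ext])
  have mZ: "measurable \<zeta> = measurable borel" by (rule measurable_cong_sets[OF Z(2) refl, THEN ext])
  have mPZ: "measurable (P \<Otimes>\<^sub>M \<zeta>) = measurable (borel \<Otimes>\<^sub>M borel)"
    by (rule measurable_cong_sets[OF sets_pair_measure_cong[OF P(2) Z(2)] refl, THEN ext])
  have add_m: "(\<lambda>(y, n). y + n) \<in> borel_measurable (P \<Otimes>\<^sub>M \<zeta>)" unfolding mPZ by measurable
  have inner_m: "(\<lambda>a. inner a u) \<in> borel_measurable (borel :: 'a measure)" by measurable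
  have "(\<integral>\<^sup>+ s. F s \<partial>slice u (distr (P \<Otimes>\<^sub>M \<zeta>) borel (\<lambda>(y, n). y + n)))
      = (\<integral>\<^sup>+ a. F (inner a u) \<partial>distr (P \<Otimes>\<^sub>M \<zeta>) borel (\<lambda>(y, n). y + n))"
    unfolding slice_def using F inner_m by (subst nn_integral_distr) auto
  also have "\<dots> = (\<integral>\<^sup>+ z. F (inner (fst z + snd z) u) \<partial>(P \<Otimes>\<^sub>M \<zeta>))"
    using F inner_m add_m by (subst nn_integral_distr) (auto simp: case_prod_beta)
  also have "\<dots> = (\<integral>\<^sup>+ y. (\<integral>\<^sup>+ n. F (inner (y + n) u) \<partial>\<zeta>) \<partial>P)"
  proof -
    have "(\<lambda>z. F (inner (fst z + snd z) u)) \<in> borel_measurable (P \<Otimes>\<^sub>M \<zeta>)"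
      unfolding mPZ using F by measurable
    from Z.nn_integral_fst[OF this] show ?thesis by simp
  qed
  also have "\<dots> = (\<integral>\<^sup>+ y. (\<integral>\<^sup>+ n. F (inner y u + inner n u) \<partial>\<zeta>) \<partial>P)"
    by (simp add: inner_add_left)
  also have "\<dots> = (\<integral>\<^sup>+ s. (\<integral>\<^sup>+ n. F (s + inner n u) \<partial>\<zeta>) \<partial>slice u P)"
  proof -
    have m1: "(\<lambda>a. inner a u) \<in> measurable P borel" unfolding mP by measurable
    have "(\<lambda>(s, n). F (s + inner n u)) \<in> borel_measurable (borel \<Otimes>\<^sub>M \<zeta>)"
      unfolding measurable_cong_sets[OF sets_pair_measure_cong[OF refl Z(2)] refl] using F by measurable
    then have m2: "(\<lambda>s. \<integral>\<^sup>+ n. F (s + inner n u) \<partial>\<zeta>) \<in> borel_measurable borel"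
      by (rule Z.borel_measurable_nn_integral)
    show ?thesis unfolding slice_def using m2 by (simp add: nn_integral_distr[OF m1])
  qed
  finally show ?thesis .
qed

lemma meas_int:
  fixes u :: "'a::euclidean_space" and \<zeta> :: "'a measure" and F :: "real \<Rightarrow> ennreal"
  assumes Z: "prob_space \<zeta>" "sets \<zeta> = sets borel" and F: "F \<in> borel_measurable borel"
  shows "(\<lambda>s. \<integral>\<^sup>+ n. F (s + inner n u) \<partial>\<zeta>) \<in> borel_measurable borel"
proof -
  interpret Z: prob_space \<zeta> by fact
  have "(\<lambda>(s, n). F (s + inner n u)) \<in> borel_measurable (borel \<Otimes>\<^sub>M \<zeta>)"
    unfolding measurable_cong_sets[OF sets_pair_measure_cong[OF refl Z(2)] refl] using F by measurable
  then show ?thesis by (rule Z.borel_measurable_nn_integral)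
qed

lemma slice_rd:
  fixes u :: "'a::euclidean_space" and P :: "'a measure"
  assumes "prob_space P" "sets P = sets borel"
  shows "real_distribution (slice u P)"
proof -
  have m: "(\<lambda>a. inner a u) \<in> measurable P borel"
    unfolding measurable_cong_sets[OF assms(2) refl] by measurable
  interpret S: prob_space "slice u P" unfolding slice_def by (rule prob_space.prob_space_distr[OF assms(1) m])
  show ?thesis by unfold_locales (simp add: slice_def)
qed

lemma core:
  fixes u :: "'a::euclidean_space" and P1 P2 \<zeta> :: "'a measure"
  assumes a: "\<alpha> > 1" and C0: "C \<ge> 0" and u: "norm u = 1"
    and P1: "prob_space P1" "sets P1 = sets borel" and P2: "prob_space P2" "sets P2 = sets borel"
    and Z: "prob_space \<zeta>" "sets \<zeta> = sets borel"
    and hyp: "\<forall>a. ereal (norm a) \<le> W_inf (slice u P1) (slice u P2) \<longrightarrow> youngc \<alpha> C (shift_meas \<zeta> a) \<zeta>"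
  shows "youngc \<alpha> C (slice u (distr (P1 \<Otimes>\<^sub>M \<zeta>) borel (\<lambda>(y, n). y + n)))
                     (slice u (distr (P2 \<Otimes>\<^sub>M \<zeta>) borel (\<lambda>(y, n). y + n)))"
  unfolding youngc_def
proof (intro ballI impI)
  interpret Z: prob_space \<zeta> by fact
  let ?\<beta> = "\<alpha> / (\<alpha> - 1)"
  let ?c = "(\<alpha> - 1) / \<alpha>"
  define \<nu> where "\<nu> = slice u P1"
  define \<mu> where "\<mu> = slice u P2"
  have nu: "real_distribution \<nu>" unfolding \<nu>_def by (rule slice_rd[OF P1])
  have mu: "real_distribution \<mu>" unfolding \<mu>_def by (rule slice_rd[OF P2])
  fix g :: "real \<Rightarrow> real"
  assume gm: "g \<in> borel_measurable (slice u (distr (P2 \<Otimes>\<^sub>M \<zeta>) borel (\<lambda>(y, n). y + n)))"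
    and g0: "\<forall>x. 0 \<le> g x"
  have gmb: "g \<in> borel_measurable borel" using gm by (simp add: slice_def)
  define G where "G = (\<lambda>x. \<integral>\<^sup>+ n. ennreal (g (x + inner n u)) \<partial>\<zeta>)"
  define K where "K = (\<lambda>x. \<integral>\<^sup>+ n. ennreal (g (x + inner n u) powr ?\<beta>) \<partial>\<zeta>)"
  have Gm: "G \<in> borel_measurable borel" unfolding G_def using gmb by (intro meas_int[OF Z]) measurable
  have Km: "K \<in> borel_measurable borel" unfolding K_def using gmb by (intro meas_int[OF Z]) measurable
  define \<Omega> where "\<Omega> = restrict_space lborel {0<..<1::real}"
  have sp\<Omega>: "space \<Omega> = {0<..<1}" unfolding \<Omega>_def by (simp add: space_restrict_space)
  have dist: "distr \<Omega> borel (qf \<rho>) = \<rho>" and qm: "qf \<rho> \<in> measurable \<Omega> borel"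
    if rho: "real_distribution \<rho>" for \<rho>
  proof -
    interpret R: cdf_distribution \<rho> using rho by (simp add: cdf_distribution_def)
    have q: "(\<lambda>\<omega>. Inf {x. \<omega> \<le> cdf \<rho> x}) = qf \<rho>" by (simp add: qf_def fun_eq_iff)
    show "distr \<Omega> borel (qf \<rho>) = \<rho>" using R.distr_I_eq_M unfolding q \<Omega>_def .
    show "qf \<rho> \<in> measurable \<Omega> borel" using R.measurable_CI unfolding q \<Omega>_def
      by (simp add: measurable_cong_sets[OF sets_restrict_space_cong[OF sets_lborel] refl])
  qed
  have "(\<integral>\<^sup>+ x. ennreal (g x) \<partial>slice u (distr (P1 \<Otimes>\<^sub>M \<zeta>) borel (\<lambda>(y, n). y + n))) = (\<integral>\<^sup>+ s. G s \<partial>\<nu>)"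
    unfolding G_def \<nu>_def using gmb by (intro slice_conv_integral[OF P1 Z]) measurable
  also have "\<dots> = (\<integral>\<^sup>+ t. G (qf \<nu> t) \<partial>\<Omega>)"
    using Gm by (subst (1) dist[OF nu, symmetric]) (simp add: nn_integral_distr[OF qm[OF nu]])
  also have "\<dots> \<le> (\<integral>\<^sup>+ t. ennreal (C / \<alpha>) + ennreal ?c * K (qf \<mu> t) \<partial>\<Omega>)"
  proof (rule nn_integral_mono)
    fix t assume "t \<in> space \<Omega>"
    then have t: "0 < t" "t < 1" using sp\<Omega> by auto
    define x where "x = qf \<nu> t"
    define y where "y = qf \<mu> t"
    define av where "av = (y - x) *\<^sub>R u"
    have "ereal (norm av) = ereal \<bar>qf \<nu> t - qf \<mu> t\<bar>"
      unfolding av_def x_def y_def using u by (simp add: abs_minus_commute)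
    also have "\<dots> \<le> W_inf (slice u P1) (slice u P2)"
      using qf_W[OF nu mu t] unfolding \<nu>_def \<mu>_def .
    finally have yc: "youngc \<alpha> C (shift_meas \<zeta> av) \<zeta>" using hyp by blast
    define h where "h = (\<lambda>m. g (y + inner m u))"
    have hm: "h \<in> borel_measurable \<zeta>" unfolding h_def measurable_cong_sets[OF Z(2) refl]
      using gmb by measurable
    have h0: "\<forall>m. 0 \<le> h m" using g0 unfolding h_def by simp
    have uu: "inner u u = 1" using u by (simp add: power2_norm_eq_inner[symmetric])
    have "(\<integral>\<^sup>+ m. ennreal (h m) \<partial>shift_meas \<zeta> av) = (\<integral>\<^sup>+ n. ennreal (h (n - av)) \<partial>\<zeta>)"
      unfolding shift_meas_def
    proof (rule nn_integral_distr)
      show "(\<lambda>x. x - av) \<in> measurable \<zeta> borel" unfolding measurable_cong_sets[OF Z(2) refl] by measurable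
      show "(\<lambda>m. ennreal (h m)) \<in> borel_measurable (distr \<zeta> borel (\<lambda>x. x - av))"
        using hm unfolding measurable_cong_sets[OF Z(2) refl] by simp
    qed
    also have "\<dots> = G x" unfolding G_def h_def av_def
      by (simp add: inner_diff_left uu algebra_simps)
    finally have eq: "(\<integral>\<^sup>+ m. ennreal (h m) \<partial>shift_meas \<zeta> av) = G x" .
    have "(\<integral>\<^sup>+ m. ennreal (h m) \<partial>shift_meas \<zeta> av) \<le> ennreal (C / \<alpha>) + ennreal ?c * (\<integral>\<^sup>+ m. ennreal (h m powr ?\<beta>) \<partial>\<zeta>)"
      using yc hm h0 unfolding youngc_def by blast
    then show "G (qf \<nu> t) \<le> ennreal (C / \<alpha>) + ennreal ?c * K (qf \<mu> t)"
      using eq unfolding K_def h_def x_def y_def by simp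
  qed
  also have "\<dots> = ennreal (C / \<alpha>) + ennreal ?c * (\<integral>\<^sup>+ t. K (qf \<mu> t) \<partial>\<Omega>)"
  proof -
    have e1: "emeasure \<Omega> (space \<Omega>) = 1" unfolding sp\<Omega> unfolding \<Omega>_def
      by (simp add: emeasure_restrict_space)
    have "(\<lambda>t. K (qf \<mu> t)) \<in> borel_measurable \<Omega>" using Km qm[OF mu] by measurable
    then show ?thesis using e1 by (simp add: nn_integral_add nn_integral_cmult)
  qed
  also have "(\<integral>\<^sup>+ t. K (qf \<mu> t) \<partial>\<Omega>) = (\<integral>\<^sup>+ s. K s \<partial>\<mu>)"
    using Km by (subst (2) dist[OF mu, symmetric]) (simp add: nn_integral_distr[OF qm[OF mu]])
  also have "\<dots> = (\<integral>\<^sup>+ x. ennreal (g x powr ?\<beta>) \<partial>slice u (distr (P2 \<Otimes>\<^sub>M \<zeta>) borel (\<lambda>(y, n). y + n)))"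
    unfolding K_def \<mu>_def using gmb by (intro slice_conv_integral[OF P2 Z, symmetric]) measurable
  finally show "(\<integral>\<^sup>+ x. ennreal (g x) \<partial>slice u (distr (P1 \<Otimes>\<^sub>M \<zeta>) borel (\<lambda>(y, n). y + n)))
      \<le> ennreal (C / \<alpha>) + ennreal ?c * (\<integral>\<^sup>+ x. ennreal (g x powr ?\<beta>) \<partial>slice u (distr (P2 \<Otimes>\<^sub>M \<zeta>) borel (\<lambda>(y, n). y + n)))" .
qed



lemma RC1:
  assumes a: "\<alpha> > 1" and sets: "sets P = sets Q" and r: "renyi_div \<alpha> P Q \<le> ereal c"
  shows "absolutely_continuous Q P \<and> hel \<alpha> P Q \<le> ennreal (exp ((\<alpha> - 1) * c))"
proof -
  have ac: "absolutely_continuous Q P"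
  proof (rule ccontr)
    assume "\<not> ?thesis"
    then have "renyi_div \<alpha> P Q = \<infinity>" unfolding renyi_div_def by simp
    with r show False by simp
  qed
  have r2: "ereal (1 / (\<alpha> - 1)) * ln_enn (hel \<alpha> P Q) \<le> ereal c"
    using r ac sets unfolding renyi_div_def hel_def by simp
  have "hel \<alpha> P Q \<le> ennreal (exp ((\<alpha> - 1) * c))"
  proof (cases "hel \<alpha> P Q" rule: ennreal_cases)
    case (real h)
    show ?thesis
    proof (cases "h = 0")
      case True then show ?thesis using real by simp
    next
      case False
      then have hp: "h > 0" using real by simp
      have "ln_enn (hel \<alpha> P Q) = ereal (ln h)" using real hp unfolding ln_enn_def by auto
      then have "1 / (\<alpha> - 1) * ln h \<le> c" using r2 by simp
      then have "ln h \<le> (\<alpha> - 1) * c" using a by (simp add: field_simps)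
      then have "h \<le> exp ((\<alpha> - 1) * c)" using hp by (metis exp_le_cancel_iff exp_ln)
      then show ?thesis using real by simp
    qed
  next
    case top
    then have "ln_enn (hel \<alpha> P Q) = \<infinity>" unfolding ln_enn_def by simp
    then have "ereal (1 / (\<alpha> - 1)) * ln_enn (hel \<alpha> P Q) = \<infinity>" using a by simp
    with r2 show ?thesis by simp
  qed
  with ac show ?thesis by simp
qed

lemma RC2:
  assumes a: "\<alpha> > 1" and sets: "sets P = sets Q" and ac: "absolutely_continuous Q P"
    and h: "hel \<alpha> P Q \<le> ennreal (exp ((\<alpha> - 1) * c))"
  shows "renyi_div \<alpha> P Q \<le> ereal c"
proof -
  have "renyi_div \<alpha> P Q = ereal (1 / (\<alpha> - 1)) * ln_enn (hel \<alpha> P Q)"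
    using ac sets unfolding renyi_div_def hel_def by simp
  also have "\<dots> \<le> ereal c"
  proof (cases "hel \<alpha> P Q" rule: ennreal_cases)
    case (real x)
    show ?thesis
    proof (cases "x = 0")
      case True
      then have "ln_enn (hel \<alpha> P Q) = -\<infinity>" using real unfolding ln_enn_def by simp
      then show ?thesis using a by simp
    next
      case False
      then have hp: "x > 0" using real by simp
      have "ln_enn (hel \<alpha> P Q) = ereal (ln x)" using real hp unfolding ln_enn_def by auto
      moreover have "x \<le> exp ((\<alpha> - 1) * c)" using h real by simp
      then have "ln x \<le> (\<alpha> - 1) * c" using hp by (metis ln_exp ln_le_cancel_iff exp_gt_zero)
      then have "1 / (\<alpha> - 1) * ln x \<le> c" using a by (simp add: field_simps)
      ultimately show ?thesis by simp
    qed
  next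
    case top with h have False by (simp add: top_unique)
    then show ?thesis ..
  qed
  finally show ?thesis .
qed

lemma pointwise:
  fixes u :: "'a::euclidean_space" and P1 P2 \<zeta> :: "'a measure"
  assumes a: "\<alpha> > 1" and u: "norm u = 1"
    and P1: "prob_space P1" "sets P1 = sets borel" and P2: "prob_space P2" "sets P2 = sets borel"
    and Z: "prob_space \<zeta>" "sets \<zeta> = sets borel"
  shows "renyi_div \<alpha> (slice u (distr (P1 \<Otimes>\<^sub>M \<zeta>) borel (\<lambda>(y, n). y + n)))
                     (slice u (distr (P2 \<Otimes>\<^sub>M \<zeta>) borel (\<lambda>(y, n). y + n)))
         \<le> R_shift \<alpha> \<zeta> (W_inf (slice u P1) (slice u P2))"
proof (rule ereal_le_real)
  fix c assume Rc: "R_shift \<alpha> \<zeta> (W_inf (slice u P1) (slice u P2)) \<le> ereal c"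
  define C where "C = exp ((\<alpha> - 1) * c)"
  have C0: "C \<ge> 0" unfolding C_def by simp
  interpret Z: prob_space \<zeta> by fact
  have hyp: "\<forall>av. ereal (norm av) \<le> W_inf (slice u P1) (slice u P2) \<longrightarrow> youngc \<alpha> C (shift_meas \<zeta> av) \<zeta>"
  proof (intro allI impI)
    fix av :: 'a assume av: "ereal (norm av) \<le> W_inf (slice u P1) (slice u P2)"
    have "renyi_div \<alpha> (shift_meas \<zeta> av) \<zeta> \<le> R_shift \<alpha> \<zeta> (W_inf (slice u P1) (slice u P2))"
      unfolding R_shift_def using av by (intro SUP_upper) auto
    also note Rc
    finally have r: "renyi_div \<alpha> (shift_meas \<zeta> av) \<zeta> \<le> ereal c" .
    have sets: "sets (shift_meas \<zeta> av) = sets \<zeta>" using Z(2) unfolding shift_meas_def by simp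
    have m: "(\<lambda>x. x - av) \<in> measurable \<zeta> borel"
      unfolding measurable_cong_sets[OF Z(2) refl] by measurable
    have ps: "prob_space (shift_meas \<zeta> av)" unfolding shift_meas_def
      by (rule Z.prob_space_distr[OF m])
    from RC1[OF a sets r] have "absolutely_continuous \<zeta> (shift_meas \<zeta> av)" "hel \<alpha> (shift_meas \<zeta> av) \<zeta> \<le> ennreal C"
      unfolding C_def by auto
    then show "youngc \<alpha> C (shift_meas \<zeta> av) \<zeta>"
      by (intro lemmaA[OF a ps Z(1) sets] C0)
  qed
  have yc: "youngc \<alpha> C (slice u (distr (P1 \<Otimes>\<^sub>M \<zeta>) borel (\<lambda>(y, n). y + n)))
                     (slice u (distr (P2 \<Otimes>\<^sub>M \<zeta>) borel (\<lambda>(y, n). y + n)))"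
    by (rule core[OF a C0 u P1 P2 Z hyp])
  have mech: "prob_space (distr (P \<Otimes>\<^sub>M \<zeta>) borel (\<lambda>(y, n). y + n))"
     "sets (distr (P \<Otimes>\<^sub>M \<zeta>) borel (\<lambda>(y, n). y + (n::'a))) = sets borel"
    if P: "prob_space P" "sets P = sets borel" for P :: "'a measure"
  proof -
    interpret P: prob_space P by fact
    interpret PZ: pair_prob_space P \<zeta> by unfold_locales
    have mPZ: "measurable (P \<Otimes>\<^sub>M \<zeta>) = measurable (borel \<Otimes>\<^sub>M borel)"
      by (rule measurable_cong_sets[OF sets_pair_measure_cong[OF P(2) Z(2)] refl, THEN ext])
    have "(\<lambda>(y, n). y + n) \<in> measurable (P \<Otimes>\<^sub>M \<zeta>) (borel :: 'a measure)" unfolding mPZ by measurable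
    then show "prob_space (distr (P \<Otimes>\<^sub>M \<zeta>) borel (\<lambda>(y, n). y + n))"
      by (rule PZ.P.prob_space_distr)
    show "sets (distr (P \<Otimes>\<^sub>M \<zeta>) borel (\<lambda>(y, n). y + (n::'a))) = sets borel" by simp
  qed
  have rd1: "real_distribution (slice u (distr (P1 \<Otimes>\<^sub>M \<zeta>) borel (\<lambda>(y, n). y + n)))"
    by (rule slice_rd[OF mech[OF P1]])
  have rd2: "real_distribution (slice u (distr (P2 \<Otimes>\<^sub>M \<zeta>) borel (\<lambda>(y, n). y + n)))"
    by (rule slice_rd[OF mech[OF P2]])
  have ps1: "prob_space (slice u (distr (P1 \<Otimes>\<^sub>M \<zeta>) borel (\<lambda>(y, n). y + n)))"
    using rd1 by (simp add: real_distribution_def)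
  have ps2: "prob_space (slice u (distr (P2 \<Otimes>\<^sub>M \<zeta>) borel (\<lambda>(y, n). y + n)))"
    using rd2 by (simp add: real_distribution_def)
  have ss: "sets (slice u (distr (P1 \<Otimes>\<^sub>M \<zeta>) borel (\<lambda>(y, n). y + n))) = sets (slice u (distr (P2 \<Otimes>\<^sub>M \<zeta>) borel (\<lambda>(y, n). y + n)))"
    by (simp add: slice_def)
  show "renyi_div \<alpha> (slice u (distr (P1 \<Otimes>\<^sub>M \<zeta>) borel (\<lambda>(y, n). y + n)))
                     (slice u (distr (P2 \<Otimes>\<^sub>M \<zeta>) borel (\<lambda>(y, n). y + n))) \<le> ereal c"
    using RC2[OF a ss lemmaB_ac[OF a ps1 ps2 ss yc]] lemmaB_hel[OF a ps1 ps2 ss yc C0]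
    unfolding C_def by simp
qed



lemma ln_enn_mono: "x \<le> y \<Longrightarrow> ln_enn x \<le> ln_enn y"
proof (cases y rule: ennreal_cases)
  case (real r)
  assume xy: "x \<le> y"
  then obtain s where s: "x = ennreal s" "s \<ge> 0" using real
    by (cases x rule: ennreal_cases) (auto simp: top_unique)
  show ?thesis
  proof (cases "s = 0")
    case True then show ?thesis using s unfolding ln_enn_def by simp
  next
    case False
    then have sp: "s > 0" using s by simp
    then have "s \<le> r" using xy s real by simp
    then show ?thesis using s real sp unfolding ln_enn_def by auto
  qed
next
  case top then show ?thesis unfolding ln_enn_def by simp
qed

lemma exp_ereal_mono: "x \<le> y \<Longrightarrow> exp_ereal x \<le> exp_ereal y"
  by (cases x; cases y) (auto simp: exp_ereal_def)

lemma query_law_prob: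
  assumes th: "prob_space \<theta>" and A: "{p \<in> space \<theta>. fst p = s} \<in> sets \<theta>"
    and pos: "secret_prob \<theta> s > 0" and fm: "(\<lambda>p. f (snd p)) \<in> borel_measurable \<theta>"
  shows "prob_space (query_law \<theta> f s)" "sets (query_law \<theta> f s) = sets borel"
proof -
  interpret T: prob_space \<theta> by fact
  let ?A = "{p \<in> space \<theta>. fst p = s}"
  let ?F = "\<lambda>p. indicator ?A p / ennreal (secret_prob \<theta> s)"
  have Fm: "?F \<in> borel_measurable \<theta>" using A by measurable
  have "emeasure (cond_secret \<theta> s) (space (cond_secret \<theta> s)) = (\<integral>\<^sup>+ p. ?F p * indicator (space \<theta>) p \<partial>\<theta>)"
    unfolding cond_secret_def by (simp add: emeasure_density[OF Fm])
  also have "\<dots> = (\<integral>\<^sup>+ p. indicator ?A p / ennreal (secret_prob \<theta> s) \<partial>\<theta>)"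
    by (intro nn_integral_cong) (auto simp: indicator_def)
  also have "\<dots> = emeasure \<theta> ?A / ennreal (secret_prob \<theta> s)"
    using A by (simp add: nn_integral_divide)
  also have "\<dots> = 1" using pos
    by (simp add: T.emeasure_eq_measure secret_prob_def divide_ennreal)
  finally have cs: "prob_space (cond_secret \<theta> s)" by (rule prob_spaceI)
  have "(\<lambda>p. f (snd p)) \<in> borel_measurable (cond_secret \<theta> s)"
    using fm unfolding cond_secret_def by simp
  then show "prob_space (query_law \<theta> f s)" unfolding query_law_def
    by (rule prob_space.prob_space_distr[OF cs])
  show "sets (query_law \<theta> f s) = sets borel" unfolding query_law_def by simp
qed

theorem corollary1:
  fixes S :: "'s set" and Q :: "('s \<times> 's) set" and \<Theta> :: "('s \<times> 'x) measure set"
    and U :: "'a::euclidean_space set" and \<omega> :: "'a measure" and \<zeta> :: "'a measure"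
    and f :: "'x \<Rightarrow> 'a" and \<alpha> \<epsilon> :: real
  assumes scen: "pufferfish_scenario S Q \<Theta>"
    and fmeas: "\<forall>\<theta>\<in>\<Theta>. (\<lambda>p. f (snd p)) \<in> borel_measurable \<theta>"
    and prof: "slice_profile U \<omega>"
    and noise: "prob_space \<zeta>" "sets \<zeta> = sets borel"
    and alpha: "\<alpha> > 1" and eps: "\<epsilon> \<ge> 0"
  shows "((\<forall>\<theta>\<in>\<Theta>. \<forall>(si, sj)\<in>Q. secret_prob \<theta> si > 0 \<and> secret_prob \<theta> sj > 0 \<longrightarrow>
             AR_inf \<alpha> \<omega> \<zeta> (query_law \<theta> f si) (query_law \<theta> f sj) \<le> ereal \<epsilon>)
          \<longrightarrow> Ave_SRPP \<alpha> \<epsilon> \<omega> S Q \<Theta> (\<lambda>\<theta> s. mech_law \<theta> f \<zeta> s))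
       \<and> ((\<forall>\<theta>\<in>\<Theta>. \<forall>(si, sj)\<in>Q. secret_prob \<theta> si > 0 \<and> secret_prob \<theta> sj > 0 \<longrightarrow>
             JR_inf \<alpha> \<omega> \<zeta> (query_law \<theta> f si) (query_law \<theta> f sj) \<le> ereal \<epsilon>)
          \<longrightarrow> Joint_SRPP \<alpha> \<epsilon> \<omega> S Q \<Theta> (\<lambda>\<theta> s. mech_law \<theta> f \<zeta> s))"
proof -
  interpret W: prob_space \<omega> using prof unfolding slice_profile_def by auto
  have aeU: "AE u in \<omega>. norm u = 1"
  proof -
    have U: "U \<in> sets \<omega>" "emeasure \<omega> U = 1" "U \<subseteq> sphere 0 1"
      using prof unfolding slice_profile_def by auto
    then have "W.prob U = 1" by (simp add: W.emeasure_eq_measure)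
    then have "AE u in \<omega>. u \<in> U" by (rule W.AE_prob_1)
    then show ?thesis by eventually_elim (use U(3) in auto)
  qed
  have key: "AE u in \<omega>. renyi_div \<alpha> (slice u (mech_law \<theta> f \<zeta> si)) (slice u (mech_law \<theta> f \<zeta> sj))
      \<le> R_shift \<alpha> \<zeta> (W_inf (slice u (query_law \<theta> f si)) (slice u (query_law \<theta> f sj)))"
    if th: "\<theta> \<in> \<Theta>" and q: "(si, sj) \<in> Q" and pi: "secret_prob \<theta> si > 0" and pj: "secret_prob \<theta> sj > 0"
    for \<theta> si sj
  proof -
    have sij: "si \<in> S" "sj \<in> S" using q scen unfolding pufferfish_scenario_def by auto
    have tp: "prob_space \<theta>" and As: "\<And>s. s \<in> S \<Longrightarrow> {p \<in> space \<theta>. fst p = s} \<in> sets \<theta>"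
      using scen th unfolding pufferfish_scenario_def by auto
    have fm: "(\<lambda>p. f (snd p)) \<in> borel_measurable \<theta>" using fmeas th by auto
    note Qi = query_law_prob[OF tp As[OF sij(1)] pi fm]
    note Qj = query_law_prob[OF tp As[OF sij(2)] pj fm]
    show ?thesis using aeU
    proof eventually_elim
      case (elim u)
      show ?case unfolding mech_law_def
        by (rule pointwise[OF alpha elim Qi Qj noise])
    qed
  qed
  show ?thesis
  proof (intro conjI impI)
    assume H: "\<forall>\<theta>\<in>\<Theta>. \<forall>(si, sj)\<in>Q. secret_prob \<theta> si > 0 \<and> secret_prob \<theta> sj > 0 \<longrightarrow>
             AR_inf \<alpha> \<omega> \<zeta> (query_law \<theta> f si) (query_law \<theta> f sj) \<le> ereal \<epsilon>"
    show "Ave_SRPP \<alpha> \<epsilon> \<omega> S Q \<Theta> (\<lambda>\<theta> s. mech_law \<theta> f \<zeta> s)"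
      unfolding Ave_SRPP_def
    proof (intro ballI impI, clarify)
      fix \<theta> si sj assume th: "\<theta> \<in> \<Theta>" and q: "(si, sj) \<in> Q" and pi: "secret_prob \<theta> si > 0" and pj: "secret_prob \<theta> sj > 0"
      have "AveSD \<alpha> \<omega> (mech_law \<theta> f \<zeta> si) (mech_law \<theta> f \<zeta> sj) \<le> AR_inf \<alpha> \<omega> \<zeta> (query_law \<theta> f si) (query_law \<theta> f sj)"
        unfolding AveSD_def AR_inf_def less_eq_ennreal.rep_eq[symmetric]
        using key[OF th q pi pj] by (intro nn_integral_mono_AE) (auto elim!: eventually_mono intro: e2ennreal_mono)
      also have "\<dots> \<le> ereal \<epsilon>" using H th q pi pj by auto
      finally show "AveSD \<alpha> \<omega> (mech_law \<theta> f \<zeta> si) (mech_law \<theta> f \<zeta> sj) \<le> ereal \<epsilon>" .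
    qed
  next
    assume H: "\<forall>\<theta>\<in>\<Theta>. \<forall>(si, sj)\<in>Q. secret_prob \<theta> si > 0 \<and> secret_prob \<theta> sj > 0 \<longrightarrow>
             JR_inf \<alpha> \<omega> \<zeta> (query_law \<theta> f si) (query_law \<theta> f sj) \<le> ereal \<epsilon>"
    show "Joint_SRPP \<alpha> \<epsilon> \<omega> S Q \<Theta> (\<lambda>\<theta> s. mech_law \<theta> f \<zeta> s)"
      unfolding Joint_SRPP_def
    proof (intro ballI impI, clarify)
      fix \<theta> si sj assume th: "\<theta> \<in> \<Theta>" and q: "(si, sj) \<in> Q" and pi: "secret_prob \<theta> si > 0" and pj: "secret_prob \<theta> sj > 0"
      have a0: "ereal (\<alpha> - 1) \<ge> 0" "ereal (1 / (\<alpha> - 1)) \<ge> 0" using alpha by auto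
      have "JSD \<alpha> \<omega> (mech_law \<theta> f \<zeta> si) (mech_law \<theta> f \<zeta> sj) \<le> JR_inf \<alpha> \<omega> \<zeta> (query_law \<theta> f si) (query_law \<theta> f sj)"
        unfolding JSD_def JR_inf_def
        using key[OF th q pi pj] a0
        by (intro ereal_mult_left_mono ln_enn_mono nn_integral_mono_AE)
           (auto elim!: eventually_mono intro!: exp_ereal_mono ereal_mult_left_mono)
      also have "\<dots> \<le> ereal \<epsilon>" using H th q pi pj by auto
      finally show "JSD \<alpha> \<omega> (mech_law \<theta> f \<zeta> si) (mech_law \<theta> f \<zeta> sj) \<le> ereal \<epsilon>" .
    qed
  qed
qed


end
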